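(* Let $X,Y$ be real Banach spaces such that $X\widehat{\otimes}_\pi Y$ has the strong diameter two property and the norm of $X^*$ is non-rough. Then $Y$ has the strong diameter two property.
   Context: A Banach space has the strong diameter two property (SD2P) if every convex combination $\sum_{i=1}^n\lambda_iS_i$ ($\lambda_i\ge0$, $\sum\lambda_i=1$) of slices $S_i=\{x\in B_X:x^*(x)>1-\alpha\}$ ($x^*\in S_{X^*}$, $0<\alpha<1$) of its unit ball has diameter $2$. $X\widehat{\otimes}_\pi Y$ is the projective tensor product. For $u\in S_Z$, $\eta(Z,u)=\limsup_{\|h\|\to0}\frac{\|u+h\|+\|u-h\|-2}{\|h\|}$; the norm of $Z$ is non-rough if there is no $\varepsilon>0$ with $\eta(Z,u)\ge\varepsilon$ for all $u\in S_Z$. *)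

theory Defs
  imports "HOL-Analysis.Analysis"
begin

definition slice :: "('a::real_normed_vector \<Rightarrow>\<^sub>L real) \<Rightarrow> real \<Rightarrow> 'a set" where
  "slice f \<alpha> = {x. norm x \<le> 1 \<and> blinfun_apply f x > 1 - \<alpha>}"

definition SD2P :: "'a::real_normed_vector itself \<Rightarrow> bool" where
  "SD2P _ \<longleftrightarrow>
     (\<forall>(n::nat) (lam::nat \<Rightarrow> real) (f::nat \<Rightarrow> ('a \<Rightarrow>\<^sub>L real)) (\<alpha>::nat \<Rightarrow> real).
        (\<forall>i<n. 0 \<le> lam i) \<and> (\<Sum>i<n. lam i) = 1 \<and>
        (\<forall>i<n. norm (f i) = 1 \<and> 0 < \<alpha> i \<and> \<alpha> i < 1)
        \<longrightarrow> diameter {(\<Sum>i<n. lam i *\<^sub>R x i) | x::nat \<Rightarrow> 'a. \<forall>i<n. x i \<in> slice (f i) (\<alpha> i)} = 2)"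

definition eta :: "'a::real_normed_vector \<Rightarrow> ereal" where
  "eta u = Limsup (at 0) (\<lambda>h. ereal ((norm (u + h) + norm (u - h) - 2) / norm h))"

definition non_rough :: "'a::real_normed_vector itself \<Rightarrow> bool" where
  "non_rough _ \<longleftrightarrow> \<not> (\<exists>\<epsilon>>0. \<forall>u::'a. norm u = 1 \<longrightarrow> eta u \<ge> ereal \<epsilon>)"

definition bilinear_norm :: "('a::real_normed_vector \<Rightarrow> 'b::real_normed_vector \<Rightarrow> real) \<Rightarrow> real" where
  "bilinear_norm B = Sup {\<bar>B x y\<bar> | x y. norm x \<le> 1 \<and> norm y \<le> 1}"

text \<open>Z (with the map tp) is the projective tensor product of X and Y, characterised up to
  isometric isomorphism: tp is bilinear with norm(tp x y) <= norm x * norm y, the span of its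
  range is dense, and every bounded bilinear form B on X x Y is of the form phi o tp for a
  functional phi on Z with norm phi = norm B  (i.e. (X (x)_pi Y)^* = Bil(X x Y)).\<close>
definition is_proj_tensor :: "('a::real_normed_vector \<Rightarrow> 'b::real_normed_vector \<Rightarrow> 'c::real_normed_vector) \<Rightarrow> bool" where
  "is_proj_tensor tp \<longleftrightarrow>
     bounded_bilinear tp \<and>
     (\<forall>x y. norm (tp x y) \<le> norm x * norm y) \<and>
     closure (span (range (\<lambda>(x, y). tp x y))) = UNIV \<and>
     (\<forall>B::'a \<Rightarrow> 'b \<Rightarrow> real. bounded_bilinear B \<longrightarrow>
        (\<exists>\<phi>::'c \<Rightarrow>\<^sub>L real. (\<forall>x y. blinfun_apply \<phi> (tp x y) = B x y) \<and> norm \<phi> = bilinear_norm B))"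

end

theory Submission
  imports Defs
begin


definition good_graph :: "('a::real_vector \<Rightarrow> real) \<Rightarrow> 'a \<Rightarrow> ('a \<times> real) set \<Rightarrow> bool" where
  "good_graph q x0 G \<longleftrightarrow>
     (\<forall>x a b. (x,a) \<in> G \<longrightarrow> (x,b) \<in> G \<longrightarrow> a = b) \<and>
     (\<forall>x a y b. (x,a) \<in> G \<longrightarrow> (y,b) \<in> G \<longrightarrow> (x+y, a+b) \<in> G) \<and>
     (\<forall>x a c. (x,a) \<in> G \<longrightarrow> (c *\<^sub>R x, c*a) \<in> G) \<and>
     (\<forall>x a. (x,a) \<in> G \<longrightarrow> a \<le> q x) \<and>
     (x0, q x0) \<in> G"

lemma HB_sublinear:
  fixes q :: "'a::real_vector \<Rightarrow> real"
  assumes sub: "\<And>x y. q (x + y) \<le> q x + q y"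
    and hom: "\<And>c x. c \<ge> 0 \<Longrightarrow> q (c *\<^sub>R x) = c * q x"
  shows "\<exists>F. linear F \<and> (\<forall>x. F x \<le> q x) \<and> F x0 = q x0"
proof -
  have q0: "q 0 = 0" using hom[of 0 0] by simp
  have qneg: "t * q x \<le> q (t *\<^sub>R x)" for t x
  proof (cases "t \<ge> 0")
    case True then show ?thesis using hom by simp
  next
    case False
    have "0 = q (t *\<^sub>R x + (-t) *\<^sub>R x)" using q0 by (simp add: scaleR_left_distrib[symmetric])
    also have "\<dots> \<le> q (t *\<^sub>R x) + q ((-t) *\<^sub>R x)" by (rule sub)
    also have "q ((-t) *\<^sub>R x) = (-t) * q x" using False hom[of "-t" x] by simp
    finally show ?thesis by simp
  qed
  define A where "A = {G. good_graph q x0 G}"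
  define G0 where "G0 = {(t *\<^sub>R x0, t * q x0) | t. True}"
  have G0m: "(x, a) \<in> G0 \<longleftrightarrow> (\<exists>t. x = t *\<^sub>R x0 \<and> a = t * q x0)" for x a
    unfolding G0_def by blast
  have G0A: "G0 \<in> A"
    unfolding A_def good_graph_def
  proof (intro CollectI conjI allI impI)
    fix x a b assume "(x, a) \<in> G0" "(x, b) \<in> G0"
    then obtain s t where st: "x = s *\<^sub>R x0" "a = s * q x0" "x = t *\<^sub>R x0" "b = t * q x0"
      unfolding G0m by blast
    show "a = b"
    proof (cases "x0 = 0")
      case True then show ?thesis using st q0 by simp
    next
      case False
      then have "s = t" using st by (metis scaleR_cancel_right)
      then show ?thesis using st by simp
    qed
  next
    fix x a y b assume "(x, a) \<in> G0" "(y, b) \<in> G0"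
    then obtain s t where st: "x = s *\<^sub>R x0" "a = s * q x0" "y = t *\<^sub>R x0" "b = t * q x0"
      unfolding G0m by blast
    show "(x + y, a + b) \<in> G0" unfolding G0m
      using st by (auto intro!: exI[of _ "s+t"] simp: scaleR_left_distrib distrib_right)
  next
    fix x a c assume "(x, a) \<in> G0"
    then obtain s where st: "x = s *\<^sub>R x0" "a = s * q x0" unfolding G0m by blast
    show "(c *\<^sub>R x, c * a) \<in> G0" unfolding G0m
      using st by (auto intro!: exI[of _ "c * s"])
  next
    fix x a assume "(x, a) \<in> G0"
    then obtain s where st: "x = s *\<^sub>R x0" "a = s * q x0" unfolding G0m by blast
    then show "a \<le> q x" using qneg by simp
  next
    show "(x0, q x0) \<in> G0" unfolding G0m by (auto intro!: exI[of _ 1])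
  qed
  have "\<exists>M\<in>A. \<forall>X\<in>A. M \<subseteq> X \<longrightarrow> X = M"
  proof (rule subset_Zorn_nonempty)
    show "A \<noteq> {}" using G0A by auto
  next
    fix C assume CC: "C \<noteq> {}" "subset.chain A C"
    then have CA: "C \<subseteq> A" and tot: "\<And>X Y. X \<in> C \<Longrightarrow> Y \<in> C \<Longrightarrow> X \<subseteq> Y \<or> Y \<subseteq> X"
      by (auto simp: subset_chain_def)
    have gC: "good_graph q x0 X" if "X \<in> C" for X using CA that A_def by auto
    show "\<Union>C \<in> A"
      unfolding A_def good_graph_def
    proof (intro CollectI conjI allI impI)
      fix x a b assume "(x, a) \<in> \<Union>C" "(x, b) \<in> \<Union>C"
      then obtain X Y where "X \<in> C" "Y \<in> C" "(x,a) \<in> X" "(x,b) \<in> Y" by auto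
      note XY = this
      show "a = b"
      proof (cases "X \<subseteq> Y")
        case True then show ?thesis using XY gC[of Y] unfolding good_graph_def by blast
      next
        case False then have "Y \<subseteq> X" using tot XY by blast
        then show ?thesis using XY gC[of X] unfolding good_graph_def by blast
      qed
    next
      fix x a y b assume "(x, a) \<in> \<Union>C" "(y, b) \<in> \<Union>C"
      then obtain X Y where XY: "X \<in> C" "Y \<in> C" "(x,a) \<in> X" "(y,b) \<in> Y" by auto
      show "(x + y, a + b) \<in> \<Union>C"
      proof (cases "X \<subseteq> Y")
        case True then show ?thesis using XY gC[of Y] unfolding good_graph_def by blast
      next
        case False then have "Y \<subseteq> X" using tot XY by blast
        then show ?thesis using XY gC[of X] unfolding good_graph_def by blast
      qed
    next
      fix x a c assume "(x, a) \<in> \<Union>C"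
      then show "(c *\<^sub>R x, c * a) \<in> \<Union>C" using gC unfolding good_graph_def by blast
    next
      fix x a assume "(x, a) \<in> \<Union>C"
      then show "a \<le> q x" using gC unfolding good_graph_def by blast
    next
      show "(x0, q x0) \<in> \<Union>C" using CC(1) gC unfolding good_graph_def by blast
    qed
  qed
  then obtain M where MA: "M \<in> A" and Mmax: "\<And>X. X \<in> A \<Longrightarrow> M \<subseteq> X \<Longrightarrow> X = M" by blast
  have gM: "good_graph q x0 M" using MA A_def by auto
  have funM: "\<And>x a b. (x,a) \<in> M \<Longrightarrow> (x,b) \<in> M \<Longrightarrow> a = b"
    and add: "\<And>x a y b. (x,a) \<in> M \<Longrightarrow> (y,b) \<in> M \<Longrightarrow> (x+y, a+b) \<in> M"
    and scl: "\<And>x a c. (x,a) \<in> M \<Longrightarrow> (c *\<^sub>R x, c*a) \<in> M"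
    and dom: "\<And>x a. (x,a) \<in> M \<Longrightarrow> a \<le> q x"
    and x0M: "(x0, q x0) \<in> M"
    using gM unfolding good_graph_def by blast+
  have total: "\<exists>a. (v, a) \<in> M" for v
  proof (rule ccontr)
    assume nv: "\<not> (\<exists>a. (v, a) \<in> M)"
    have key: "b - q (y - v) \<le> q (x + v) - a" if "(x,a) \<in> M" "(y,b) \<in> M" for x a y b
    proof -
      have "a + b \<le> q (x + y)" using add[OF that] dom by blast
      also have "x + y = (x + v) + (y - v)" by simp
      also have "q \<dots> \<le> q (x + v) + q (y - v)" by (rule sub)
      finally show ?thesis by simp
    qed
    define c where "c = Sup {b - q (y - v) | y b. (y,b) \<in> M}"
    have M00: "(0, 0) \<in> M" using scl[OF x0M, of 0] by simp
    have ne: "{b - q (y - v) | y b. (y,b) \<in> M} \<noteq> {}" using M00 by blast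
    have bdd: "bdd_above {b - q (y - v) | y b. (y,b) \<in> M}"
      using key[OF M00] by (auto intro!: bdd_aboveI[of _ "q (0 + v) - 0"])
    have c_ge: "b - q (y - v) \<le> c" if "(y,b) \<in> M" for y b
      unfolding c_def using bdd that by (auto intro!: cSup_upper)
    have c_le: "c \<le> q (x + v) - a" if "(x,a) \<in> M" for x a
      unfolding c_def using ne key[OF that] by (auto intro!: cSup_least)
    define M' where "M' = {(x + t *\<^sub>R v, a + t * c) | x a t. (x,a) \<in> M}"
    have M'm: "(z, a) \<in> M' \<longleftrightarrow> (\<exists>x a' t. z = x + t *\<^sub>R v \<and> a = a' + t * c \<and> (x,a') \<in> M)" for z a
      unfolding M'_def by blast
    have "M' \<in> A"
      unfolding A_def good_graph_def
    proof (intro CollectI conjI allI impI)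
      fix z a b assume "(z, a) \<in> M'" "(z, b) \<in> M'"
      then obtain x a' s y b' t where xs: "z = x + s *\<^sub>R v" "a = a' + s * c" "(x,a') \<in> M"
        and yt: "z = y + t *\<^sub>R v" "b = b' + t * c" "(y,b') \<in> M"
        unfolding M'm by blast
      have "s = t"
      proof (rule ccontr)
        assume "s \<noteq> t"
        have "(s - t) *\<^sub>R v = y - x" using xs yt by (simp add: algebra_simps)
        then have "(1/(s-t)) *\<^sub>R ((s - t) *\<^sub>R v) = (1/(s-t)) *\<^sub>R (y - x)" by simp
        then have "v = (1/(s-t)) *\<^sub>R (y - x)" using \<open>s \<noteq> t\<close> by simp
        moreover have "(y - x, b' - a') \<in> M" using add[OF yt(3) scl[OF xs(3), of "-1"]] by simp
        ultimately show False using nv scl by blast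
      qed
      then have "x = y" using xs yt by simp
      then show "a = b" using funM xs yt \<open>s = t\<close> by blast
    next
      fix z a z' b assume "(z, a) \<in> M'" "(z', b) \<in> M'"
      then obtain x a' s y b' t where xs: "z = x + s *\<^sub>R v" "a = a' + s * c" "(x,a') \<in> M"
        and yt: "z' = y + t *\<^sub>R v" "b = b' + t * c" "(y,b') \<in> M"
        unfolding M'm by blast
      show "(z + z', a + b) \<in> M'" unfolding M'm
        apply (rule exI[of _ "x+y"], rule exI[of _ "a'+b'"], rule exI[of _ "s+t"])
        using add[OF xs(3) yt(3)] xs yt by (simp add: algebra_simps)
    next
      fix z a d assume "(z, a) \<in> M'"
      then obtain x a' s where xs: "z = x + s *\<^sub>R v" "a = a' + s * c" "(x,a') \<in> M"
        unfolding M'm by blast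
      show "(d *\<^sub>R z, d * a) \<in> M'" unfolding M'm
        apply (rule exI[of _ "d *\<^sub>R x"], rule exI[of _ "d * a'"], rule exI[of _ "d * s"])
        using scl[OF xs(3), of d] xs by (simp add: algebra_simps)
    next
      fix z a assume "(z, a) \<in> M'"
      then obtain x a' t where xs: "z = x + t *\<^sub>R v" "a = a' + t * c" "(x,a') \<in> M"
        unfolding M'm by blast
      show "a \<le> q z"
      proof (cases "t = 0")
        case True then show ?thesis using xs dom by simp
      next
        case False
        show ?thesis
        proof (cases "t > 0")
          case True
          have m: "((1/t) *\<^sub>R x, (1/t) * a') \<in> M" by (rule scl[OF xs(3)])
          have "c \<le> q ((1/t) *\<^sub>R x + v) - (1/t) * a'" by (rule c_le[OF m])
          then have "t * c \<le> t * q ((1/t) *\<^sub>R x + v) - a'" using True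
            by (simp add: field_simps)
          also have "t * q ((1/t) *\<^sub>R x + v) = q (t *\<^sub>R ((1/t) *\<^sub>R x + v))"
            using hom[of t] True by simp
          also have "t *\<^sub>R ((1/t) *\<^sub>R x + v) = z" using True xs by (simp add: algebra_simps)
          finally show ?thesis using xs by simp
        next
          case False
          then have tn: "t < 0" using \<open>t \<noteq> 0\<close> by simp
          define s where "s = - t"
          have s: "s > 0" using tn s_def by simp
          have m: "((1/s) *\<^sub>R x, (1/s) * a') \<in> M" by (rule scl[OF xs(3)])
          have "(1/s) * a' - q ((1/s) *\<^sub>R x - v) \<le> c" by (rule c_ge[OF m])
          then have "a' - s * c \<le> s * q ((1/s) *\<^sub>R x - v)" using s
            by (simp add: field_simps)
          also have "s * q ((1/s) *\<^sub>R x - v) = q (s *\<^sub>R ((1/s) *\<^sub>R x - v))"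
            using hom[of s] s by simp
          also have "s *\<^sub>R ((1/s) *\<^sub>R x - v) = z" using s xs s_def by (simp add: algebra_simps)
          finally show ?thesis using xs s_def by simp
        qed
      qed
    next
      show "(x0, q x0) \<in> M'" unfolding M'm
        apply (rule exI[of _ x0], rule exI[of _ "q x0"], rule exI[of _ 0])
        using x0M by simp
    qed
    moreover have "M \<subseteq> M'"
    proof
      fix p assume "p \<in> M"
      then show "p \<in> M'" using M'm[of "fst p" "snd p"]
        by (metis add.right_neutral mult_zero_left prod.collapse scaleR_zero_left)
    qed
    moreover have "(v, c) \<in> M'" unfolding M'm
      apply (rule exI[of _ 0], rule exI[of _ 0], rule exI[of _ 1])
      using M00 by simp
    ultimately show False using Mmax nv by blast
  qed
  define F where "F x = (THE a. (x,a) \<in> M)" for x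
  have FM: "(x, F x) \<in> M" for x
    unfolding F_def using total[of x] funM by (metis theI)
  have Feq: "(x, a) \<in> M \<Longrightarrow> F x = a" for x a using FM funM by blast
  have "linear F"
  proof (rule linearI)
    show "F (x + y) = F x + F y" for x y using Feq[OF add[OF FM FM]] .
    show "F (c *\<^sub>R x) = c *\<^sub>R F x" for c x using Feq[OF scl[OF FM]] by simp
  qed
  moreover have "\<forall>x. F x \<le> q x" using FM dom by blast
  moreover have "F x0 = q x0" using Feq[OF x0M] .
  ultimately show ?thesis by blast
qed



lemma norming_functional:
  fixes x :: "'a::real_normed_vector"
  shows "\<exists>h::'a \<Rightarrow>\<^sub>L real. norm h \<le> 1 \<and> blinfun_apply h x = norm x"
proof -
  obtain F where F: "linear F" "\<forall>w. F w \<le> norm w" "F x = norm x"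
    using HB_sublinear[of norm x] norm_triangle_ineq by fastforce
  have Fb: "\<bar>F w\<bar> \<le> norm w" for w
  proof -
    have "- F w = F (- w)" using F(1) by (simp add: linear_neg)
    also have "\<dots> \<le> norm w" using F(2) by (metis norm_minus_cancel)
    finally have "- F w \<le> norm w" .
    moreover have "F w \<le> norm w" using F(2) by blast
    ultimately show ?thesis by linarith
  qed
  have bl: "bounded_linear F"
    using F(1) Fb by (intro bounded_linear_intro[of F 1]) (auto simp: linear_add linear_scale)
  define h where "h = Blinfun F"
  have ha: "blinfun_apply h = F" unfolding h_def using bl by (simp add: bounded_linear_Blinfun_apply)
  have "norm h \<le> 1" by (rule norm_blinfun_bound) (auto simp: ha Fb)
  then show ?thesis using ha F(3) by auto
qed

lemma blinfun_le_norm: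
  fixes f :: "'a::real_normed_vector \<Rightarrow>\<^sub>L real"
  shows "norm x \<le> 1 \<Longrightarrow> blinfun_apply f x \<le> norm f"
  using norm_blinfun[of f x] by (smt (verit) mult_left_le norm_ge_zero real_norm_def)

lemma approx_norm:
  fixes f :: "'a::real_normed_vector \<Rightarrow>\<^sub>L real"
  assumes "norm f = 1" "e > 0"
  shows "\<exists>x. norm x \<le> 1 \<and> blinfun_apply f x > 1 - e"
proof (rule ccontr)
  assume H: "\<not> ?thesis"
  show False
  proof (cases "e > 1")
    case True then show False using H[unfolded not_ex] by (metis blinfun.zero_right diff_less_0_iff_less norm_zero zero_le_one not_le)
  next
    case False
    have "norm (blinfun_apply f w) \<le> (1 - e) * norm w" for w
    proof (cases "w = 0")
      case True then show ?thesis by simp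
    next
      case False
      let ?v = "(1 / norm w) *\<^sub>R w"
      have nv: "norm ?v \<le> 1" "norm (- ?v) \<le> 1" using False by auto
      have "blinfun_apply f ?v \<le> 1 - e" "blinfun_apply f (- ?v) \<le> 1 - e" using H nv by (auto simp: not_less)
      then have "\<bar>blinfun_apply f ?v\<bar> \<le> 1 - e" by (auto simp: blinfun.minus_right blinfun.scaleR_right)
      then have "\<bar>blinfun_apply f w\<bar> / norm w \<le> 1 - e" using False
        by (simp add: blinfun.scaleR_right abs_mult)
      then show ?thesis using False by (simp add: divide_le_eq)
    qed
    then have "norm f \<le> 1 - e" using False by (intro norm_blinfun_bound) auto
    then show False using assms by simp
  qed
qed

lemma small_slice:
  fixes u :: "'a::real_normed_vector \<Rightarrow>\<^sub>L real"
  assumes eta: "eta u < ereal \<epsilon>" and ep: "\<epsilon> > 0"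
  shows "\<exists>\<beta>>0. \<forall>x1 x2. norm x1 \<le> 1 \<and> norm x2 \<le> 1 \<and> blinfun_apply u x1 > 1 - \<beta> \<and> blinfun_apply u x2 > 1 - \<beta>
            \<longrightarrow> norm (x1 - x2) < 2 * \<epsilon>"
proof -
  have "eventually (\<lambda>h. ereal ((norm (u + h) + norm (u - h) - 2) / norm h) < ereal \<epsilon>) (at 0)"
    using Limsup_lessD[OF eta[unfolded eta_def]] .
  then obtain d where d: "d > 0"
    and dH: "\<And>h. h \<noteq> 0 \<Longrightarrow> dist h 0 < d \<Longrightarrow> (norm (u + h) + norm (u - h) - 2) / norm h < \<epsilon>"
    unfolding eventually_at by auto
  define t where "t = d / 2"
  have t: "t > 0" "t < d" using d t_def by auto
  define \<beta> where "\<beta> = \<epsilon> * t / 2"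
  have b: "\<beta> > 0" using t ep unfolding \<beta>_def by simp
  have "norm (x1 - x2) < 2 * \<epsilon>" if x: "norm x1 \<le> 1" "norm x2 \<le> 1" "blinfun_apply u x1 > 1 - \<beta>" "blinfun_apply u x2 > 1 - \<beta>" for x1 x2
  proof (cases "x1 = x2")
    case True then show ?thesis using ep by simp
  next
    case False
    obtain h0 :: "'a \<Rightarrow>\<^sub>L real" where h0: "norm h0 \<le> 1" "blinfun_apply h0 (x1 - x2) = norm (x1 - x2)"
      using norming_functional by blast
    have "norm (x1 - x2) \<le> norm h0 * norm (x1 - x2)" using h0(2) norm_blinfun[of h0 "x1 - x2"] by simp
    then have "norm h0 \<ge> 1" using False by simp
    then have nh0: "norm h0 = 1" using h0 by simp
    define h where "h = t *\<^sub>R h0"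
    have nh: "norm h = t" using nh0 t by (simp add: h_def)
    have hne: "h \<noteq> 0" using nh t by auto
    have "(norm (u + h) + norm (u - h) - 2) / norm h < \<epsilon>" using dH[OF hne] nh t by (simp add: dist_norm)
    then have lt: "norm (u + h) + norm (u - h) - 2 < \<epsilon> * t" using nh t by (simp add: divide_less_eq)
    have "blinfun_apply (u + h) x1 \<le> norm (u + h)" by (rule blinfun_le_norm[OF x(1)])
    moreover have "blinfun_apply (u - h) x2 \<le> norm (u - h)" by (rule blinfun_le_norm[OF x(2)])
    moreover have "blinfun_apply (u + h) x1 + blinfun_apply (u - h) x2
        = blinfun_apply u x1 + blinfun_apply u x2 + t * norm (x1 - x2)"
      using h0(2) by (simp add: h_def plus_blinfun.rep_eq minus_blinfun.rep_eq scaleR_blinfun.rep_eq blinfun.diff_right algebra_simps)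
    ultimately have "blinfun_apply u x1 + blinfun_apply u x2 + t * norm (x1 - x2) - 2 < \<epsilon> * t" using lt by linarith
    then have "t * norm (x1 - x2) < \<epsilon> * t + 2 * \<beta>" using x by linarith
    then have "t * norm (x1 - x2) < t * (2 * \<epsilon>)" unfolding \<beta>_def by (simp add: algebra_simps)
    then show ?thesis using t by simp
  qed
  then show ?thesis using b by blast
qed



definition TS :: "('a::real_normed_vector \<Rightarrow> 'b::real_normed_vector \<Rightarrow> 'c::real_normed_vector) \<Rightarrow> 'c set" where
  "TS tp = {tp x y | x y. norm x \<le> 1 \<and> norm y \<le> 1}"

lemma tensor_approx:
  fixes tp :: "'a::real_normed_vector \<Rightarrow> 'b::real_normed_vector \<Rightarrow> 'c::real_normed_vector"
  assumes tp: "is_proj_tensor tp" and z: "norm z \<le> 1" and r: "r > 0"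
  shows "\<exists>k \<in> convex hull (TS tp). norm (z - k) < r"
proof (rule ccontr)
  assume "\<not> ?thesis"
  then have far: "\<And>k. k \<in> convex hull (TS tp) \<Longrightarrow> r \<le> norm (z - k)" by (auto simp: not_less)
  define K where "K = convex hull (TS tp)"
  have bb: "bounded_bilinear tp" and tpn: "\<And>x y. norm (tp x y) \<le> norm x * norm y"
    and dense: "closure (span (range (\<lambda>(x, y). tp x y))) = UNIV"
    and dual: "\<And>B::'a \<Rightarrow> 'b \<Rightarrow> real. bounded_bilinear B \<Longrightarrow>
        (\<exists>\<phi>::'c \<Rightarrow>\<^sub>L real. (\<forall>x y. blinfun_apply \<phi> (tp x y) = B x y) \<and> norm \<phi> = bilinear_norm B)"
    using tp unfolding is_proj_tensor_def by blast+
  interpret tpb: bounded_bilinear tp by (rule bb)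
  have SK: "TS tp \<subseteq> K" unfolding K_def by (rule hull_subset)
  have convK: "convex K" unfolding K_def by simp
  have S0: "0 \<in> TS tp" unfolding TS_def by (auto intro!: exI[of _ 0] simp: tpb.zero_left)
  have K0: "0 \<in> K" using S0 SK by auto
  have Sball: "TS tp \<subseteq> cball 0 1" unfolding TS_def
  proof
    fix w assume "w \<in> {tp x y |x y. norm x \<le> 1 \<and> norm y \<le> 1}"
    then obtain x y where xy: "w = tp x y" "norm x \<le> 1" "norm y \<le> 1" by blast
    have "norm x * norm y \<le> 1" using xy by (simp add: mult_le_one)
    then show "w \<in> cball 0 1" using tpn[of x y] xy by simp
  qed
  have Kball: "K \<subseteq> cball 0 1" unfolding K_def using Sball by (simp add: hull_minimal)
  have Kscale: "c *\<^sub>R k \<in> K" if "0 \<le> c" "c \<le> 1" "k \<in> K" for c k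
    using convexD[OF convK that(3) K0, of c "1 - c"] that by simp
  define r' where "r' = min r 1"
  have r': "0 < r'" "r' \<le> 1" "r' \<le> r" using r unfolding r'_def by auto
  define M where "M = 2 / r'"
  have M: "M > 0" "M * r' = 2" using r' unfolding M_def by auto
  define Q where "Q w = {c + M * norm (w - c *\<^sub>R k) | c k. 0 \<le> c \<and> k \<in> K}" for w
  define q where "q w = Inf (Q w)" for w
  have Qne: "Q w \<noteq> {}" for w unfolding Q_def using K0 by blast
  have Qpos: "e \<in> Q w \<Longrightarrow> 0 \<le> e" for e w unfolding Q_def using M by auto
  have Qbdd: "bdd_below (Q w)" for w using Qpos by (meson bdd_belowI)
  have q_le: "e \<in> Q w \<Longrightarrow> q w \<le> e" for e w unfolding q_def using Qbdd[of w] by (simp add: cInf_lower)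
  have q_ge: "(\<And>e. e \<in> Q w \<Longrightarrow> a \<le> e) \<Longrightarrow> a \<le> q w" for a w unfolding q_def using Qne[of w] by (simp add: cInf_greatest)
  have QI: "c + M * norm (w - c *\<^sub>R k) \<in> Q w" if "0 \<le> c" "k \<in> K" for c k w
    unfolding Q_def using that by blast
  have q_nonneg: "0 \<le> q w" for w using q_ge Qpos by blast
  have q_normbd: "q w \<le> M * norm w" for w using q_le[OF QI[OF order_refl K0]] by simp
  have q_K: "q k \<le> 1" if "k \<in> K" for k using q_le[OF QI[OF zero_le_one that, of k]] by simp
  have q_sub: "q (w1 + w2) \<le> q w1 + q w2" for w1 w2
  proof -
    have main: "q (w1 + w2) \<le> e1 + e2" if e1: "e1 \<in> Q w1" and e2: "e2 \<in> Q w2" for e1 e2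
    proof -
      obtain c1 k1 where 1: "e1 = c1 + M * norm (w1 - c1 *\<^sub>R k1)" "0 \<le> c1" "k1 \<in> K" using e1 unfolding Q_def by blast
      obtain c2 k2 where 2: "e2 = c2 + M * norm (w2 - c2 *\<^sub>R k2)" "0 \<le> c2" "k2 \<in> K" using e2 unfolding Q_def by blast
      show ?thesis
      proof (cases "c1 + c2 = 0")
        case True
        then have "c1 = 0" "c2 = 0" using 1 2 by auto
        then have "q (w1 + w2) \<le> M * norm (w1 + w2)" using q_normbd by blast
        also have "\<dots> \<le> M * norm w1 + M * norm w2" using M norm_triangle_ineq[of w1 w2]
          by (simp add: distrib_left[symmetric])
        finally show ?thesis using 1 2 \<open>c1 = 0\<close> \<open>c2 = 0\<close> by simp
      next
        case False
        define c where "c = c1 + c2"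
        have c: "c > 0" using False 1 2 c_def by simp
        define k where "k = (c1 / c) *\<^sub>R k1 + (c2 / c) *\<^sub>R k2"
        have kK: "k \<in> K" unfolding k_def
          using convexD[OF convK 1(3) 2(3), of "c1/c" "c2/c"] 1 2 c c_def by (simp add: add_divide_distrib[symmetric])
        have ck: "c *\<^sub>R k = c1 *\<^sub>R k1 + c2 *\<^sub>R k2" unfolding k_def using c by (simp add: scaleR_add_right)
        have "q (w1 + w2) \<le> c + M * norm (w1 + w2 - c *\<^sub>R k)" by (rule q_le[OF QI[OF _ kK]]) (use c in simp)
        also have "w1 + w2 - c *\<^sub>R k = (w1 - c1 *\<^sub>R k1) + (w2 - c2 *\<^sub>R k2)" using ck by simp
        also have "c + M * norm \<dots> \<le> e1 + e2"
          using norm_triangle_ineq[of "w1 - c1 *\<^sub>R k1" "w2 - c2 *\<^sub>R k2"] M 1 2 c_def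
          by (simp add: distrib_left[symmetric])
        finally show ?thesis .
      qed
    qed
    have "q (w1 + w2) - e2 \<le> q w1" if "e2 \<in> Q w2" for e2
      using main[OF _ that] q_ge[of w1 "q (w1 + w2) - e2"] by force
    then have "q (w1 + w2) - q w1 \<le> q w2"
      using q_ge[of w2 "q (w1 + w2) - q w1"] by force
    then show ?thesis by simp
  qed
  have q_hom: "q (a *\<^sub>R w) = a * q w" if a: "0 \<le> a" for a w
  proof (cases "a = 0")
    case True
    then show ?thesis using q_normbd[of 0] q_nonneg[of 0] by simp
  next
    case False
    then have a: "a > 0" using a by simp
    have 1: "q (a *\<^sub>R w) \<le> a * e" if eQ: "e \<in> Q w" for e
    proof -
      obtain c k where ck: "e = c + M * norm (w - c *\<^sub>R k)" "0 \<le> c" "k \<in> K" using eQ unfolding Q_def by blast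
      have "q (a *\<^sub>R w) \<le> a * c + M * norm (a *\<^sub>R w - (a * c) *\<^sub>R k)"
        by (rule q_le[OF QI[OF _ ck(3)]]) (use a ck in simp)
      also have "a *\<^sub>R w - (a * c) *\<^sub>R k = a *\<^sub>R (w - c *\<^sub>R k)" by (simp add: algebra_simps)
      also have "a * c + M * norm \<dots> = a * e" using a ck by (simp only: norm_scaleR) (simp add: distrib_left mult.left_commute)
      finally show ?thesis .
    qed
    have 2: "a * q w \<le> e" if eQ: "e \<in> Q (a *\<^sub>R w)" for e
    proof -
      obtain c k where ck: "e = c + M * norm (a *\<^sub>R w - c *\<^sub>R k)" "0 \<le> c" "k \<in> K" using eQ unfolding Q_def by blast
      have "q w \<le> c / a + M * norm (w - (c / a) *\<^sub>R k)"
        by (rule q_le[OF QI[OF _ ck(3)]]) (use a ck in simp)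
      also have "a *\<^sub>R w - c *\<^sub>R k = a *\<^sub>R (w - (c / a) *\<^sub>R k)" using a by (simp add: algebra_simps)
      then have "e = a * (c / a + M * norm (w - (c / a) *\<^sub>R k))" using a ck by (simp only: norm_scaleR) (simp add: distrib_left mult.left_commute)
      ultimately show ?thesis using a by (simp add: mult_le_cancel_left_pos)
    qed
    have "q (a *\<^sub>R w) / a \<le> q w"
    proof (rule q_ge)
      fix e assume "e \<in> Q w"
      then have "q (a *\<^sub>R w) \<le> e * a" using 1[of e] by (simp only: mult.commute)
      then show "q (a *\<^sub>R w) / a \<le> e" using a by (simp add: pos_divide_le_eq)
    qed
    then have "q (a *\<^sub>R w) \<le> q w * a" using a by (simp add: pos_divide_le_eq)
    moreover have "a * q w \<le> q (a *\<^sub>R w)" using 2 by (intro q_ge) simp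
    ultimately show ?thesis by (simp add: mult.commute)
  qed
  have q_z: "1 + r' / 2 \<le> q z"
  proof (rule q_ge)
    fix e assume "e \<in> Q z"
    then obtain c k where ck: "e = c + M * norm (z - c *\<^sub>R k)" "0 \<le> c" "k \<in> K" unfolding Q_def by blast
    have nk: "norm k \<le> 1" using Kball ck(3) by auto
    show "1 + r' / 2 \<le> e"
    proof (cases "c \<le> 1")
      case True
      have "r \<le> norm (z - c *\<^sub>R k)" using far Kscale[OF ck(2) True ck(3)] unfolding K_def by blast
      then have "M * r' \<le> M * norm (z - c *\<^sub>R k)" using M r' by (intro mult_left_mono) auto
      then show ?thesis using M ck r' by simp
    next
      case False
      show ?thesis
      proof (cases "c \<le> 1 + r' / 2")
        case True
        have "r \<le> norm (z - k)" using far ck(3) unfolding K_def by blast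
        moreover have "norm (z - k) \<le> norm (z - c *\<^sub>R k) + norm ((c - 1) *\<^sub>R k)"
          using norm_triangle_ineq[of "z - c *\<^sub>R k" "(c - 1) *\<^sub>R k"] by (simp add: algebra_simps)
        moreover have "norm ((c - 1) *\<^sub>R k) \<le> r' / 2"
        proof -
          have "norm ((c - 1) *\<^sub>R k) = (c - 1) * norm k" using False by simp
          also have "\<dots> \<le> (c - 1) * 1" using False nk by (intro mult_left_mono) auto
          finally show ?thesis using True by simp
        qed
        ultimately have "r' / 2 \<le> norm (z - c *\<^sub>R k)" using r' by linarith
        then have "M * (r' / 2) \<le> M * norm (z - c *\<^sub>R k)" using M by (intro mult_left_mono) auto
        moreover have "M * (r' / 2) = 1" using M(2) by simp
        ultimately show ?thesis using ck False r' by linarith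
      next
        case False
        have "0 \<le> M * norm (z - c *\<^sub>R k)" using M by simp
        then show ?thesis using ck False by linarith
      qed
    qed
  qed
  obtain F where F: "linear F" "\<forall>w. F w \<le> q w" "F z = q z"
    using HB_sublinear[of q z] q_sub q_hom by blast
  have Fb: "\<bar>F w\<bar> \<le> M * norm w" for w
  proof -
    have "- F w = F (- w)" using F(1) by (simp add: linear_neg)
    also have "\<dots> \<le> M * norm w" using F(2) q_normbd by (metis norm_minus_cancel order_trans)
    finally have "- F w \<le> M * norm w" .
    moreover have "F w \<le> M * norm w" using F(2) q_normbd order_trans by blast
    ultimately show ?thesis by linarith
  qed
  have Fbl: "bounded_linear F"
    using F(1) Fb by (intro bounded_linear_intro[of F M]) (auto simp: linear_add linear_scale mult.commute)
  interpret Fl: bounded_linear F by (rule Fbl)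
  define B where "B x y = F (tp x y)" for x y
  have Bbb: "bounded_bilinear B"
  proof
    show "B (a + a') b = B a b + B a' b" for a a' b unfolding B_def by (simp add: tpb.add_left Fl.add)
    show "B a (b + b') = B a b + B a b'" for a b b' unfolding B_def by (simp add: tpb.add_right Fl.add)
    show "B (r *\<^sub>R a) b = r *\<^sub>R B a b" for r a b unfolding B_def by (simp add: tpb.scaleR_left Fl.scaleR)
    show "B a (r *\<^sub>R b) = r *\<^sub>R B a b" for r a b unfolding B_def by (simp add: tpb.scaleR_right Fl.scaleR)
    show "\<exists>K. \<forall>a b. norm (B a b) \<le> norm a * norm b * K"
    proof (intro exI allI)
      fix a b
      have "norm (B a b) \<le> M * norm (tp a b)" unfolding B_def using Fb by simp
      also have "\<dots> \<le> M * (norm a * norm b)" using tpn M by (intro mult_left_mono) auto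
      finally show "norm (B a b) \<le> norm a * norm b * M" by (simp add: ac_simps)
    qed
  qed
  obtain \<phi> :: "'c \<Rightarrow>\<^sub>L real" where phi: "\<And>x y. blinfun_apply \<phi> (tp x y) = B x y" "norm \<phi> = bilinear_norm B"
    using dual[OF Bbb] by blast
  have Babs: "\<bar>B x y\<bar> \<le> 1" if "norm x \<le> 1" "norm y \<le> 1" for x y
  proof -
    have "norm (- x) \<le> 1" using that by simp
    then have "tp x y \<in> K" "tp (- x) y \<in> K" using SK that unfolding TS_def by blast+
    then have "F (tp x y) \<le> 1" "F (tp (- x) y) \<le> 1" using F(2) q_K order_trans by blast+
    then show ?thesis unfolding B_def by (simp add: tpb.minus_left Fl.neg)
  qed
  have "bilinear_norm B \<le> 1" unfolding bilinear_norm_def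
    using Babs by (intro cSup_least) (auto intro!: exI[of _ 0] simp: B_def tpb.zero_left Fl.zero)
  then have nphi: "norm \<phi> \<le> 1" using phi by simp
  have eq_span: "blinfun_apply \<phi> w = F w" if "w \<in> span (range (\<lambda>(x, y). tp x y))" for w
  proof (rule linear_eq_on_span[OF _ F(1) _ that])
    show "linear (blinfun_apply \<phi>)" using blinfun.bounded_linear_right bounded_linear.linear by blast
    show "\<And>x. x \<in> range (\<lambda>(x, y). tp x y) \<Longrightarrow> blinfun_apply \<phi> x = F x" using phi B_def by auto
  qed
  have cl: "closed {w. blinfun_apply \<phi> w = F w}"
    by (intro closed_Collect_eq linear_continuous_on blinfun.bounded_linear_right Fbl)
  have "closure (span (range (\<lambda>(x, y). tp x y))) \<subseteq> {w. blinfun_apply \<phi> w = F w}"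
    by (rule closure_minimal[OF _ cl]) (use eq_span in blast)
  then have "blinfun_apply \<phi> z = F z" using dense by blast
  moreover have "blinfun_apply \<phi> z \<le> 1" using blinfun_le_norm[OF z, of \<phi>] nphi by simp
  ultimately show False using F(3) q_z r' by simp
qed



lemma key_slice:
  fixes tp :: "'a::real_normed_vector \<Rightarrow> 'b::real_normed_vector \<Rightarrow> 'c::real_normed_vector"
    and u :: "'a \<Rightarrow>\<^sub>L real" and g :: "'b \<Rightarrow>\<^sub>L real" and \<Phi> :: "'c \<Rightarrow>\<^sub>L real"
  assumes tp: "is_proj_tensor tp"
    and nu: "norm u \<le> 1" and ng: "norm g \<le> 1"
    and x0: "norm x0 \<le> 1" "blinfun_apply u x0 > 1 - \<beta>"
    and small: "\<forall>x1 x2. norm x1 \<le> 1 \<and> norm x2 \<le> 1 \<and> blinfun_apply u x1 > 1 - \<beta> \<and> blinfun_apply u x2 > 1 - \<beta>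
            \<longrightarrow> norm (x1 - x2) < \<epsilon>"
    and ka: "0 < \<kappa>" "\<kappa> \<le> \<beta>" "\<kappa> \<le> \<alpha>" "\<kappa> \<le> 1"
    and Phi: "\<And>x y. blinfun_apply \<Phi> (tp x y) = blinfun_apply u x * blinfun_apply g y" "norm \<Phi> \<le> 1"
    and z: "norm z \<le> 1" "blinfun_apply \<Phi> z > 1 - \<gamma>"
    and eta: "\<eta> > 0" "\<gamma> + \<eta> < \<kappa>" and ep: "\<epsilon> \<ge> 0"
  shows "\<exists>y'. y' \<in> slice g \<alpha> \<and> norm (z - tp x0 y') \<le> \<eta> + 2 * ((\<gamma> + \<eta>) / \<kappa>) + \<epsilon>"
proof -
  have bb: "bounded_bilinear tp" and tpn: "\<And>x y. norm (tp x y) \<le> norm x * norm y"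
    using tp unfolding is_proj_tensor_def by blast+
  interpret tpb: bounded_bilinear tp by (rule bb)
  obtain k where kK: "k \<in> convex hull (TS tp)" and zk: "norm (z - k) < \<eta>"
    using tensor_approx[OF tp z(1) eta(1)] by blast
  obtain V \<mu> where V: "finite V" "V \<subseteq> TS tp" "\<forall>v\<in>V. 0 \<le> \<mu> v" "sum \<mu> V = 1" "(\<Sum>v\<in>V. \<mu> v *\<^sub>R v) = k"
    using kK unfolding convex_hull_explicit by blast
  have "\<forall>v\<in>V. \<exists>p. v = tp (fst p) (snd p) \<and> norm (fst p) \<le> 1 \<and> norm (snd p) \<le> 1 \<and> 0 \<le> blinfun_apply u (fst p)"
  proof
    fix v assume "v \<in> V"
    then obtain x y where xy: "v = tp x y" "norm x \<le> 1" "norm y \<le> 1" using V(2) unfolding TS_def by blast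
    show "\<exists>p. v = tp (fst p) (snd p) \<and> norm (fst p) \<le> 1 \<and> norm (snd p) \<le> 1 \<and> 0 \<le> blinfun_apply u (fst p)"
    proof (cases "0 \<le> blinfun_apply u x")
      case True then show ?thesis using xy by (intro exI[of _ "(x, y)"]) auto
    next
      case False
      have "tp (- x) (- y) = tp x y" by (simp add: tpb.minus_left tpb.minus_right)
      then show ?thesis using xy False by (intro exI[of _ "(- x, - y)"]) (auto simp: blinfun.minus_right)
    qed
  qed
  then obtain P where P: "\<And>v. v \<in> V \<Longrightarrow> v = tp (fst (P v)) (snd (P v)) \<and> norm (fst (P v)) \<le> 1 \<and> norm (snd (P v)) \<le> 1 \<and> 0 \<le> blinfun_apply u (fst (P v))"
    by metis
  define xf where "xf v = fst (P v)" for v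
  define yf where "yf v = snd (P v)" for v
  have vV: "v = tp (xf v) (yf v)" "norm (xf v) \<le> 1" "norm (yf v) \<le> 1" "0 \<le> blinfun_apply u (xf v)" if "v \<in> V" for v
    using P[OF that] unfolding xf_def yf_def by auto
  define p where "p v = blinfun_apply u (xf v) * blinfun_apply g (yf v)" for v
  have ule: "blinfun_apply u (xf v) \<le> 1" if "v \<in> V" for v
    using blinfun_le_norm[OF vV(2)[OF that], of u] nu by simp
  have gle: "blinfun_apply g (yf v) \<le> 1" if "v \<in> V" for v
    using blinfun_le_norm[OF vV(3)[OF that], of g] ng by simp
  have p1: "p v \<le> 1" if "v \<in> V" for v
  proof -
    have "p v \<le> blinfun_apply u (xf v) * 1" unfolding p_def using vV(4)[OF that] gle[OF that] by (intro mult_left_mono) auto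
    then show ?thesis using ule[OF that] by simp
  qed
  define Gd where "Gd = {v\<in>V. blinfun_apply u (xf v) > 1 - \<beta> \<and> blinfun_apply g (yf v) > 1 - \<alpha>}"
  define Bd where "Bd = V - Gd"
  have GdV: "Gd \<subseteq> V" unfolding Gd_def by auto
  have fin: "finite Gd" "finite Bd" using V(1) GdV unfolding Bd_def by (auto intro: finite_subset)
  have disj: "Gd \<inter> Bd = {}" "Gd \<union> Bd = V" using GdV unfolding Bd_def by auto
  have pB: "p v \<le> 1 - \<kappa>" if "v \<in> Bd" for v
  proof -
    have vV': "v \<in> V" using that unfolding Bd_def by auto
    have nG: "blinfun_apply u (xf v) \<le> 1 - \<beta> \<or> blinfun_apply g (yf v) \<le> 1 - \<alpha>"
      using that unfolding Bd_def Gd_def by auto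
    show ?thesis
    proof (cases "blinfun_apply g (yf v) \<le> 0")
      case True
      then have "p v \<le> 0" unfolding p_def using vV(4)[OF vV'] by (simp add: mult_nonneg_nonpos)
      then show ?thesis using ka by simp
    next
      case False
      show ?thesis
      proof (cases "blinfun_apply u (xf v) \<le> 1 - \<beta>")
        case True
        have "p v \<le> blinfun_apply u (xf v) * 1" unfolding p_def using vV(4)[OF vV'] gle[OF vV'] by (intro mult_left_mono) auto
        then show ?thesis using True ka by simp
      next
        case False2: False
        then have gl: "blinfun_apply g (yf v) \<le> 1 - \<alpha>" using nG by simp
        have "p v \<le> 1 * blinfun_apply g (yf v)" unfolding p_def using False ule[OF vV'] by (intro mult_right_mono) auto
        then show ?thesis using gl ka by simp
      qed
    qed
  qed
  define W where "W = sum \<mu> Bd"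
  define G where "G = sum \<mu> Gd"
  have GW: "G + W = 1" unfolding G_def W_def using sum.union_disjoint[OF fin disj(1), of \<mu>] disj(2) V(4) by simp
  have W0: "0 \<le> W" unfolding W_def using V(3) disj(2) by (intro sum_nonneg) auto
  have Phik: "blinfun_apply \<Phi> k = (\<Sum>v\<in>V. \<mu> v * p v)"
  proof -
    have "blinfun_apply \<Phi> k = (\<Sum>v\<in>V. \<mu> v * blinfun_apply \<Phi> v)"
      using V(5)[symmetric] by (simp add: blinfun.sum_right blinfun.scaleR_right)
    also have "\<dots> = (\<Sum>v\<in>V. \<mu> v * p v)"
    proof (rule sum.cong[OF refl])
      fix v assume v: "v \<in> V"
      have "blinfun_apply \<Phi> v = p v"
        using arg_cong[OF vV(1)[OF v], of "blinfun_apply \<Phi>"] Phi(1) unfolding p_def by simp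
      then show "\<mu> v * blinfun_apply \<Phi> v = \<mu> v * p v" by simp
    qed
    finally show ?thesis .
  qed
  have "blinfun_apply \<Phi> z - blinfun_apply \<Phi> k \<le> \<eta>"
  proof -
    have "blinfun_apply \<Phi> z - blinfun_apply \<Phi> k = blinfun_apply \<Phi> (z - k)" by (simp add: blinfun.diff_right)
    also have "\<dots> \<le> norm \<Phi> * norm (z - k)" using norm_blinfun[of \<Phi> "z - k"] by simp
    also have "\<dots> \<le> 1 * norm (z - k)" using Phi(2) by (intro mult_right_mono) auto
    finally show ?thesis using zk by simp
  qed
  then have Pk: "1 - \<gamma> - \<eta> < (\<Sum>v\<in>V. \<mu> v * p v)" using z(2) Phik by simp
  have "(\<Sum>v\<in>V. \<mu> v * p v) = (\<Sum>v\<in>Gd. \<mu> v * p v) + (\<Sum>v\<in>Bd. \<mu> v * p v)"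
    using sum.union_disjoint[OF fin disj(1), of "\<lambda>v. \<mu> v * p v"] disj(2) by simp
  also have "(\<Sum>v\<in>Gd. \<mu> v * p v) \<le> (\<Sum>v\<in>Gd. \<mu> v * 1)"
    using GdV V(3) p1 by (intro sum_mono mult_left_mono) auto
  also have "(\<Sum>v\<in>Bd. \<mu> v * p v) \<le> (\<Sum>v\<in>Bd. \<mu> v * (1 - \<kappa>))"
    using disj(2) V(3) pB by (intro sum_mono mult_left_mono) auto
  finally have "1 - \<gamma> - \<eta> < G + W * (1 - \<kappa>)" using Pk unfolding G_def W_def by (simp add: sum_distrib_right)
  then have "\<kappa> * W < \<gamma> + \<eta>" using GW by (simp add: algebra_simps)
  then have Wlt: "W < (\<gamma> + \<eta>) / \<kappa>" using ka by (simp add: pos_less_divide_eq mult.commute)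
  have "(\<gamma> + \<eta>) / \<kappa> < 1" using eta ka by simp
  then have G0: "G > 0" using GW Wlt by simp
  define y' where "y' = (\<Sum>v\<in>Gd. (\<mu> v / G) *\<^sub>R yf v)"
  have sumw: "(\<Sum>v\<in>Gd. \<mu> v / G) = 1" using G0 unfolding G_def by (simp add: sum_divide_distrib[symmetric])
  have ny': "norm y' \<le> 1"
  proof -
    have "norm y' \<le> (\<Sum>v\<in>Gd. norm ((\<mu> v / G) *\<^sub>R yf v))" unfolding y'_def by (rule norm_sum)
    also have "\<dots> \<le> (\<Sum>v\<in>Gd. \<mu> v / G)"
    proof (rule sum_mono)
      fix v assume "v \<in> Gd"
      then have "v \<in> V" using GdV by auto
      then have "\<mu> v / G * norm (yf v) \<le> \<mu> v / G * 1"
        using vV(3) V(3) G0 by (intro mult_left_mono) auto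
      then show "norm ((\<mu> v / G) *\<^sub>R yf v) \<le> \<mu> v / G"
        using V(3) G0 \<open>v \<in> V\<close> by simp
    qed
    finally show ?thesis using sumw by simp
  qed
  have gy': "blinfun_apply g y' > 1 - \<alpha>"
  proof -
    have "blinfun_apply g y' - (1 - \<alpha>) = (\<Sum>v\<in>Gd. (\<mu> v / G) * (blinfun_apply g (yf v) - (1 - \<alpha>)))"
    proof -
      have e1: "blinfun_apply g y' = (\<Sum>v\<in>Gd. (\<mu> v / G) * blinfun_apply g (yf v))"
        unfolding y'_def by (simp add: blinfun.sum_right blinfun.scaleR_right)
      have e2: "(\<Sum>v\<in>Gd. (\<mu> v / G) * (1 - \<alpha>)) = 1 - \<alpha>"
        using sumw by (simp only: sum_distrib_right[symmetric]) simp
      show ?thesis unfolding e1 using e2 by (simp add: sum_subtractf right_diff_distrib)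
    qed
    moreover have "0 < (\<Sum>v\<in>Gd. (\<mu> v / G) * (blinfun_apply g (yf v) - (1 - \<alpha>)))"
    proof -
      obtain v where v: "v \<in> Gd" "\<mu> v > 0"
      proof (rule ccontr)
        assume "\<not> thesis"
        then have "\<forall>v\<in>Gd. \<mu> v \<le> 0" using that by (meson not_less)
        then have "G \<le> 0" unfolding G_def by (simp add: sum_nonpos)
        then show False using G0 by simp
      qed
      show ?thesis
        apply (rule sum_pos2[OF fin(1) v(1)])
        using v G0 V(3) GdV unfolding Gd_def by auto
    qed
    ultimately show ?thesis by simp
  qed
  have ys: "y' \<in> slice g \<alpha>" unfolding slice_def using ny' gy' by simp
  have kdec: "k - G *\<^sub>R tp x0 y' = (\<Sum>v\<in>Bd. \<mu> v *\<^sub>R tp (xf v) (yf v)) + (\<Sum>v\<in>Gd. \<mu> v *\<^sub>R tp (xf v - x0) (yf v))"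
  proof -
    have k1: "k = (\<Sum>v\<in>Gd. \<mu> v *\<^sub>R tp (xf v) (yf v)) + (\<Sum>v\<in>Bd. \<mu> v *\<^sub>R tp (xf v) (yf v))"
    proof -
      have "k = (\<Sum>v\<in>V. \<mu> v *\<^sub>R tp (xf v) (yf v))" using V(5) vV(1) by (auto intro!: sum.cong)
      then show ?thesis using sum.union_disjoint[OF fin disj(1), of "\<lambda>v. \<mu> v *\<^sub>R tp (xf v) (yf v)"] disj(2) by simp
    qed
    have "G *\<^sub>R tp x0 y' = tp x0 (G *\<^sub>R y')" by (simp add: tpb.scaleR_right)
    also have "G *\<^sub>R y' = (\<Sum>v\<in>Gd. \<mu> v *\<^sub>R yf v)" unfolding y'_def using G0
      by (simp add: scaleR_sum_right)
    also have "tp x0 \<dots> = (\<Sum>v\<in>Gd. \<mu> v *\<^sub>R tp x0 (yf v))" by (simp add: tpb.sum_right tpb.scaleR_right)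
    finally have "G *\<^sub>R tp x0 y' = (\<Sum>v\<in>Gd. \<mu> v *\<^sub>R tp x0 (yf v))" .
    then show ?thesis using k1
      by (simp add: tpb.diff_left scaleR_diff_right sum_subtractf)
  qed
  have nk: "norm (k - G *\<^sub>R tp x0 y') \<le> W + \<epsilon>"
  proof -
    have "norm (k - G *\<^sub>R tp x0 y') \<le> norm (\<Sum>v\<in>Bd. \<mu> v *\<^sub>R tp (xf v) (yf v)) + norm (\<Sum>v\<in>Gd. \<mu> v *\<^sub>R tp (xf v - x0) (yf v))"
      unfolding kdec by (rule norm_triangle_ineq)
    also have "norm (\<Sum>v\<in>Bd. \<mu> v *\<^sub>R tp (xf v) (yf v)) \<le> (\<Sum>v\<in>Bd. \<mu> v)"
    proof -
      have "norm (\<Sum>v\<in>Bd. \<mu> v *\<^sub>R tp (xf v) (yf v)) \<le> (\<Sum>v\<in>Bd. norm (\<mu> v *\<^sub>R tp (xf v) (yf v)))" by (rule norm_sum)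
      also have "\<dots> \<le> (\<Sum>v\<in>Bd. \<mu> v)"
      proof (rule sum_mono)
        fix v assume "v \<in> Bd"
        then have v: "v \<in> V" using disj by auto
        have "norm (xf v) * norm (yf v) \<le> 1" using vV(2,3)[OF v] by (simp add: mult_le_one)
        then have "norm (tp (xf v) (yf v)) \<le> 1"
          using tpn[of "xf v" "yf v"] by linarith
        then show "norm (\<mu> v *\<^sub>R tp (xf v) (yf v)) \<le> \<mu> v" using V(3) v by (simp add: mult_left_le)
      qed
      finally show ?thesis .
    qed
    also have "norm (\<Sum>v\<in>Gd. \<mu> v *\<^sub>R tp (xf v - x0) (yf v)) \<le> (\<Sum>v\<in>Gd. \<mu> v * \<epsilon>)"
    proof -
      have "norm (\<Sum>v\<in>Gd. \<mu> v *\<^sub>R tp (xf v - x0) (yf v)) \<le> (\<Sum>v\<in>Gd. norm (\<mu> v *\<^sub>R tp (xf v - x0) (yf v)))" by (rule norm_sum)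
      also have "\<dots> \<le> (\<Sum>v\<in>Gd. \<mu> v * \<epsilon>)"
      proof (rule sum_mono)
        fix v assume vG: "v \<in> Gd"
        then have v: "v \<in> V" using GdV by auto
        have "norm (xf v - x0) < \<epsilon>" using small vV(2)[OF v] x0 vG unfolding Gd_def by blast
        moreover have "norm (xf v - x0) * norm (yf v) \<le> norm (xf v - x0) * 1"
          using vV(3)[OF v] by (intro mult_left_mono) auto
        ultimately have "norm (tp (xf v - x0) (yf v)) \<le> \<epsilon>"
          using tpn[of "xf v - x0" "yf v"] by linarith
        then show "norm (\<mu> v *\<^sub>R tp (xf v - x0) (yf v)) \<le> \<mu> v * \<epsilon>" using V(3) v by (simp add: mult_left_mono)
      qed
      finally show ?thesis .
    qed
    also have "(\<Sum>v\<in>Gd. \<mu> v * \<epsilon>) = G * \<epsilon>" unfolding G_def by (simp add: sum_distrib_right)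
    also have "G * \<epsilon> \<le> 1 * \<epsilon>" using GW W0 ep by (intro mult_right_mono) auto
    finally show ?thesis unfolding W_def by simp
  qed
  have nG: "norm ((G - 1) *\<^sub>R tp x0 y') \<le> W"
  proof -
    have "norm x0 * norm y' \<le> 1" using x0(1) ny' by (simp add: mult_le_one)
    then have "norm (tp x0 y') \<le> 1" using tpn[of x0 y'] by linarith
    then have "\<bar>G - 1\<bar> * norm (tp x0 y') \<le> \<bar>G - 1\<bar> * 1" by (intro mult_left_mono) auto
    then have "norm ((G - 1) *\<^sub>R tp x0 y') \<le> \<bar>G - 1\<bar> * 1" by simp
    then show ?thesis using GW W0 by simp
  qed
  have "z - tp x0 y' = (z - k) + (k - G *\<^sub>R tp x0 y') + (G - 1) *\<^sub>R tp x0 y'" by (simp add: algebra_simps)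
  then have "norm (z - tp x0 y') \<le> norm (z - k) + norm (k - G *\<^sub>R tp x0 y') + norm ((G - 1) *\<^sub>R tp x0 y')"
    by (metis norm_triangle_le order_refl add_mono)
  also have "\<dots> \<le> \<eta> + (W + \<epsilon>) + W" using zk nk nG by simp
  also have "\<dots> \<le> \<eta> + 2 * ((\<gamma> + \<eta>) / \<kappa>) + \<epsilon>" using Wlt by linarith
  finally show ?thesis using ys by blast
qed



lemma blinfun_abs_le:
  fixes f :: "'a::real_normed_vector \<Rightarrow>\<^sub>L real"
  shows "norm x \<le> 1 \<Longrightarrow> norm f \<le> 1 \<Longrightarrow> \<bar>blinfun_apply f x\<bar> \<le> 1"
  using norm_blinfun[of f x] by (metis mult_le_one norm_ge_zero order_trans real_norm_def)

lemma bil_norm_prod: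
  fixes u :: "'a::real_normed_vector \<Rightarrow>\<^sub>L real" and g :: "'b::real_normed_vector \<Rightarrow>\<^sub>L real"
  assumes u: "norm u = 1" and g: "norm g = 1"
  shows "bilinear_norm (\<lambda>x y. blinfun_apply u x * blinfun_apply g y) = 1"
proof -
  define S where "S = {\<bar>blinfun_apply u x * blinfun_apply g y\<bar> | x y. norm x \<le> 1 \<and> norm y \<le> 1}"
  have Sle: "s \<le> 1" if sS: "s \<in> S" for s
  proof -
    obtain x y where xy: "s = \<bar>blinfun_apply u x * blinfun_apply g y\<bar>" "norm x \<le> 1" "norm y \<le> 1"
      using sS unfolding S_def by blast
    have "\<bar>blinfun_apply u x\<bar> \<le> 1" using blinfun_abs_le[of x u] xy u by simp
    moreover have "\<bar>blinfun_apply g y\<bar> \<le> 1" using blinfun_abs_le[of y g] xy g by simp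
    ultimately have "\<bar>blinfun_apply u x\<bar> * \<bar>blinfun_apply g y\<bar> \<le> 1" by (simp add: mult_le_one)
    then show ?thesis using xy by (simp add: abs_mult)
  qed
  have Sne: "S \<noteq> {}" unfolding S_def by (auto intro!: exI[of _ 0])
  have bdd: "bdd_above S" using Sle by (meson bdd_aboveI)
  have le: "Sup S \<le> 1" using Sne Sle by (simp add: cSup_least)
  have ge: "1 \<le> Sup S"
  proof (rule ccontr)
    assume "\<not> 1 \<le> Sup S"
    define e where "e = (1 - Sup S) / 4"
    have "0 \<in> S" unfolding S_def by (auto intro!: exI[of _ 0])
    then have "0 \<le> Sup S" using bdd by (rule cSup_upper)
    then have e: "e > 0" "e \<le> 1/2" using \<open>\<not> 1 \<le> Sup S\<close> unfolding e_def by auto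
    obtain x where x: "norm x \<le> 1" "blinfun_apply u x > 1 - e" using approx_norm[OF u e(1)] by blast
    obtain y where y: "norm y \<le> 1" "blinfun_apply g y > 1 - e" using approx_norm[OF g e(1)] by blast
    have "(1 - e) * (1 - e) \<le> blinfun_apply u x * blinfun_apply g y"
      using x y e by (intro mult_mono) auto
    moreover have "1 - 2 * e \<le> (1 - e) * (1 - e)" by (simp add: algebra_simps)
    moreover have "\<bar>blinfun_apply u x * blinfun_apply g y\<bar> \<le> Sup S"
      using x y bdd unfolding S_def by (intro cSup_upper) blast+
    moreover have "blinfun_apply u x * blinfun_apply g y \<le> \<bar>blinfun_apply u x * blinfun_apply g y\<bar>" by simp
    ultimately have "1 - 2 * e \<le> Sup S" by (meson order_trans)
    then show False using \<open>\<not> 1 \<le> Sup S\<close> unfolding e_def by (simp add: field_simps)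
  qed
  show ?thesis unfolding bilinear_norm_def S_def[symmetric] using le ge by simp
qed

lemma conv_norm_le:
  fixes d :: "nat \<Rightarrow> 'a::real_normed_vector"
  assumes "\<forall>i<n. 0 \<le> lam i" "sum lam {..<n} = 1" "\<And>i. i < n \<Longrightarrow> norm (d i) \<le> E"
  shows "norm (\<Sum>i<n. lam i *\<^sub>R d i) \<le> E"
proof -
  have "norm (\<Sum>i<n. lam i *\<^sub>R d i) \<le> (\<Sum>i<n. norm (lam i *\<^sub>R d i))" by (rule norm_sum)
  also have "\<dots> \<le> (\<Sum>i<n. lam i * E)"
    using assms by (intro sum_mono) (auto intro!: mult_left_mono)
  also have "\<dots> = E" using assms(2) by (simp add: sum_distrib_right[symmetric])
  finally show ?thesis .
qed

lemma slice_nonempty: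
  fixes f :: "'a::real_normed_vector \<Rightarrow>\<^sub>L real"
  assumes "norm f = 1" "0 < a"
  shows "\<exists>y. y \<in> slice f a"
  using approx_norm[OF assms] unfolding slice_def by auto

theorem mainTheorem16:
  fixes tp :: "'x::banach \<Rightarrow> 'y::banach \<Rightarrow> 'z::banach"
  assumes "is_proj_tensor tp"
    and "SD2P TYPE('z)"
    and "non_rough TYPE('x \<Rightarrow>\<^sub>L real)"
  shows "SD2P TYPE('y)"
proof -
  note tp = assms(1)
  have sdz: "\<And>n lam (f::nat \<Rightarrow> ('z \<Rightarrow>\<^sub>L real)) \<alpha>. (\<forall>i<n. 0 \<le> lam i) \<Longrightarrow> (\<Sum>i<n. lam i) = 1 \<Longrightarrow>
        (\<forall>i<n. norm (f i) = 1 \<and> 0 < \<alpha> i \<and> \<alpha> i < 1) \<Longrightarrow>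
        diameter {(\<Sum>i<n. lam i *\<^sub>R x i) | x::nat \<Rightarrow> 'z. \<forall>i<n. x i \<in> slice (f i) (\<alpha> i)} = 2"
    using assms(2) unfolding SD2P_def by blast
  have nr: "\<And>\<epsilon>. \<epsilon> > 0 \<Longrightarrow> \<exists>u::'x \<Rightarrow>\<^sub>L real. norm u = 1 \<and> eta u < ereal \<epsilon>"
    using assms(3) unfolding non_rough_def by (meson not_le)
  have bbtp: "bounded_bilinear tp" and tpn: "\<And>x y. norm (tp x y) \<le> norm x * norm y"
    and dual: "\<And>B::'x \<Rightarrow> 'y \<Rightarrow> real. bounded_bilinear B \<Longrightarrow>
        (\<exists>\<phi>::'z \<Rightarrow>\<^sub>L real. (\<forall>x y. blinfun_apply \<phi> (tp x y) = B x y) \<and> norm \<phi> = bilinear_norm B)"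
    using tp unfolding is_proj_tensor_def by blast+
  interpret tpb: bounded_bilinear tp by (rule bbtp)
  show ?thesis unfolding SD2P_def
  proof (intro allI impI)
    fix n and lam :: "nat \<Rightarrow> real" and f :: "nat \<Rightarrow> ('y \<Rightarrow>\<^sub>L real)" and \<alpha> :: "nat \<Rightarrow> real"
    assume H: "(\<forall>i<n. 0 \<le> lam i) \<and> (\<Sum>i<n. lam i) = 1 \<and> (\<forall>i<n. norm (f i) = 1 \<and> 0 < \<alpha> i \<and> \<alpha> i < 1)"
    then have lam0: "\<forall>i<n. 0 \<le> lam i" and lam1: "(\<Sum>i<n. lam i) = 1"
      and fa: "\<And>i. i < n \<Longrightarrow> norm (f i) = 1" "\<And>i. i < n \<Longrightarrow> 0 < \<alpha> i" "\<And>i. i < n \<Longrightarrow> \<alpha> i < 1" by auto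
    define C where "C = {(\<Sum>i<n. lam i *\<^sub>R x i) | x::nat \<Rightarrow> 'y. \<forall>i<n. x i \<in> slice (f i) (\<alpha> i)}"
    have n0: "n > 0" using lam1 by (cases n) auto
    have Cball: "norm c \<le> 1" if cC: "c \<in> C" for c
    proof -
      obtain x where x: "c = (\<Sum>i<n. lam i *\<^sub>R x i)" "\<forall>i<n. x i \<in> slice (f i) (\<alpha> i)" using cC unfolding C_def by blast
      show ?thesis unfolding x(1) using x(2) by (intro conv_norm_le[OF lam0 lam1]) (auto simp: slice_def)
    qed
    have Cbdd: "bounded C" unfolding bounded_iff using Cball by blast
    have "\<forall>i. \<exists>y. i < n \<longrightarrow> y \<in> slice (f i) (\<alpha> i)" using slice_nonempty fa by blast
    then obtain y0 where "\<forall>i. i < n \<longrightarrow> y0 i \<in> slice (f i) (\<alpha> i)" by metis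
    then have Cne: "C \<noteq> {}" unfolding C_def by blast
    have dle: "diameter C \<le> 2"
    proof (rule diameter_le)
      show "C \<noteq> {} \<or> 0 \<le> (2::real)" by simp
      fix a b assume "a \<in> C" "b \<in> C"
      then have "norm a \<le> 1" "norm b \<le> 1" using Cball by auto
      then show "norm (a - b) \<le> 2" using norm_triangle_ineq4[of a b] by linarith
    qed
    have far: "\<exists>a\<in>C. \<exists>b\<in>C. 2 - \<delta> < dist a b" if \<delta>: "0 < \<delta>" "\<delta> \<le> 1" for \<delta>
    proof -
      obtain u :: "'x \<Rightarrow>\<^sub>L real" where u: "norm u = 1" "eta u < ereal (\<delta> / 16)" using nr[of "\<delta> / 16"] \<delta> by auto
      obtain \<beta> where \<beta>: "\<beta> > 0" and sm0: "\<forall>x1 x2. norm x1 \<le> 1 \<and> norm x2 \<le> 1 \<and> blinfun_apply u x1 > 1 - \<beta> \<and> blinfun_apply u x2 > 1 - \<beta>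
            \<longrightarrow> norm (x1 - x2) < 2 * (\<delta> / 16)"
        using small_slice[OF u(2)] \<delta> by auto
      define \<epsilon> where "\<epsilon> = \<delta> / 8"
      have sm: "\<forall>x1 x2. norm x1 \<le> 1 \<and> norm x2 \<le> 1 \<and> blinfun_apply u x1 > 1 - \<beta> \<and> blinfun_apply u x2 > 1 - \<beta>
            \<longrightarrow> norm (x1 - x2) < \<epsilon>" using sm0 unfolding \<epsilon>_def by simp
      obtain x0 where x0: "norm x0 \<le> 1" "blinfun_apply u x0 > 1 - \<beta>" using approx_norm[OF u(1) \<beta>] by blast
      define \<kappa> where "\<kappa> = min (min \<beta> 1) (Min (\<alpha> ` {..<n}))"
      have finA: "finite (\<alpha> ` {..<n})" and neA: "\<alpha> ` {..<n} \<noteq> {}" using n0 by auto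
      have "0 < Min (\<alpha> ` {..<n})" using finA neA fa(2) by (simp add: Min_gr_iff)
      then have ka0: "0 < \<kappa>" using \<beta> unfolding \<kappa>_def by simp
      have kab: "\<kappa> \<le> \<beta>" "\<kappa> \<le> 1" unfolding \<kappa>_def by auto
      have kaa: "\<kappa> \<le> \<alpha> i" if "i < n" for i
      proof -
        have "Min (\<alpha> ` {..<n}) \<le> \<alpha> i" using finA that by (intro Min_le) auto
        then show ?thesis unfolding \<kappa>_def by simp
      qed
      define \<gamma> where "\<gamma> = \<kappa> * \<delta> / 16"
      have kd1: "\<kappa> * \<delta> \<le> \<kappa> * 1" using ka0 \<delta> by (intro mult_left_mono) auto
      have kd2: "\<kappa> * \<delta> \<le> 1 * \<delta>" using kab \<delta> by (intro mult_right_mono) auto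
      have kd0: "0 < \<kappa> * \<delta>" using ka0 \<delta> by simp
      have g0: "0 < \<gamma>" "\<gamma> < 1" "\<gamma> \<le> \<delta> / 16" using kd0 kd1 kd2 kab unfolding \<gamma>_def by linarith+
      have gk: "\<gamma> + \<gamma> < \<kappa>" using kd1 ka0 unfolding \<gamma>_def by linarith
      have frac: "(\<gamma> + \<gamma>) / \<kappa> = \<delta> / 8" using ka0 unfolding \<gamma>_def by (simp add: field_simps)
      have "\<forall>i. \<exists>\<Phi>::'z \<Rightarrow>\<^sub>L real. i < n \<longrightarrow> ((\<forall>x y. blinfun_apply \<Phi> (tp x y) = blinfun_apply u x * blinfun_apply (f i) y) \<and> norm \<Phi> = 1)"
      proof
        fix i
        show "\<exists>\<Phi>::'z \<Rightarrow>\<^sub>L real. i < n \<longrightarrow> ((\<forall>x y. blinfun_apply \<Phi> (tp x y) = blinfun_apply u x * blinfun_apply (f i) y) \<and> norm \<Phi> = 1)"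
        proof (cases "i < n")
          case True
          have bb: "bounded_bilinear (\<lambda>x y. blinfun_apply u x * blinfun_apply (f i) y)"
            by (rule bounded_bilinear.comp[OF bounded_bilinear_mult blinfun.bounded_linear_right blinfun.bounded_linear_right])
          show ?thesis using dual[OF bb] bil_norm_prod[OF u(1) fa(1)[OF True]] by auto
        next
          case False then show ?thesis by simp
        qed
      qed
      then obtain \<Phi> :: "nat \<Rightarrow> ('z \<Rightarrow>\<^sub>L real)" where Phi: "\<And>i. i < n \<Longrightarrow> (\<forall>x y. blinfun_apply (\<Phi> i) (tp x y) = blinfun_apply u x * blinfun_apply (f i) y) \<and> norm (\<Phi> i) = 1"
        by metis
      define CZ where "CZ = {(\<Sum>i<n. lam i *\<^sub>R x i) | x::nat \<Rightarrow> 'z. \<forall>i<n. x i \<in> slice (\<Phi> i) ((\<lambda>_. \<gamma>) i)}"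
      have prem: "\<forall>i<n. norm (\<Phi> i) = 1 \<and> 0 < (\<lambda>_. \<gamma>) i \<and> (\<lambda>_. \<gamma>) i < 1" using Phi g0 by auto
      have DZ: "diameter CZ = 2" unfolding CZ_def using sdz[OF lam0 lam1 prem] by simp
      have CZball: "norm c \<le> 1" if cC: "c \<in> CZ" for c
      proof -
        obtain x where x: "c = (\<Sum>i<n. lam i *\<^sub>R x i)" "\<forall>i<n. x i \<in> slice (\<Phi> i) \<gamma>" using cC unfolding CZ_def by blast
        show ?thesis unfolding x(1) using x(2) by (intro conv_norm_le[OF lam0 lam1]) (auto simp: slice_def)
      qed
      have CZbdd: "bounded CZ" unfolding bounded_iff using CZball by blast
      obtain a b where ab: "a \<in> CZ" "b \<in> CZ" "2 - \<gamma> < dist a b"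
        using diameter_lower_bounded[OF CZbdd, of "2 - \<gamma>"] DZ g0 by auto
      obtain zz where zz: "a = (\<Sum>i<n. lam i *\<^sub>R zz i)" "\<forall>i<n. zz i \<in> slice (\<Phi> i) \<gamma>" using ab(1) unfolding CZ_def by blast
      obtain ww where ww: "b = (\<Sum>i<n. lam i *\<^sub>R ww i)" "\<forall>i<n. ww i \<in> slice (\<Phi> i) \<gamma>" using ab(2) unfolding CZ_def by blast
      define E where "E = \<gamma> + 2 * ((\<gamma> + \<gamma>) / \<kappa>) + \<epsilon>"
      have approx: "\<exists>y. y \<in> slice (f i) (\<alpha> i) \<and> norm (w - tp x0 y) \<le> E"
        if i: "i < n" and w: "w \<in> slice (\<Phi> i) \<gamma>" for i w
      proof -
        have "\<exists>y'. y' \<in> slice (f i) (\<alpha> i) \<and> norm (w - tp x0 y') \<le> \<gamma> + 2 * ((\<gamma> + \<gamma>) / \<kappa>) + \<epsilon>"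
        proof (rule key_slice[OF tp _ _ x0 sm ka0 kab(1) kaa[OF i] kab(2)])
          show "norm u \<le> 1" using u by simp
          show "norm (f i) \<le> 1" using fa(1)[OF i] by simp
          show "\<And>x y. blinfun_apply (\<Phi> i) (tp x y) = blinfun_apply u x * blinfun_apply (f i) y" using Phi[OF i] by blast
          show "norm (\<Phi> i) \<le> 1" using Phi[OF i] by simp
          show "norm w \<le> 1" "blinfun_apply (\<Phi> i) w > 1 - \<gamma>" using w unfolding slice_def by auto
          show "\<gamma> > 0" "\<gamma> + \<gamma> < \<kappa>" "\<epsilon> \<ge> 0" using g0 gk \<delta> unfolding \<epsilon>_def by auto
        qed
        then show ?thesis unfolding E_def .
      qed
      have "\<forall>i. \<exists>y. i < n \<longrightarrow> y \<in> slice (f i) (\<alpha> i) \<and> norm (zz i - tp x0 y) \<le> E"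
      proof
        fix i
        show "\<exists>y. i < n \<longrightarrow> y \<in> slice (f i) (\<alpha> i) \<and> norm (zz i - tp x0 y) \<le> E"
        proof (cases "i < n")
          case True
          then show ?thesis using approx[OF True zz(2)[rule_format, OF True]] by blast
        qed simp
      qed
      then obtain ya where ya: "\<And>i. i < n \<Longrightarrow> ya i \<in> slice (f i) (\<alpha> i) \<and> norm (zz i - tp x0 (ya i)) \<le> E" by metis
      have "\<forall>i. \<exists>y. i < n \<longrightarrow> y \<in> slice (f i) (\<alpha> i) \<and> norm (ww i - tp x0 y) \<le> E"
      proof
        fix i
        show "\<exists>y. i < n \<longrightarrow> y \<in> slice (f i) (\<alpha> i) \<and> norm (ww i - tp x0 y) \<le> E"
        proof (cases "i < n")
          case True
          then show ?thesis using approx[OF True ww(2)[rule_format, OF True]] by blast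
        qed simp
      qed
      then obtain yb where yb: "\<And>i. i < n \<Longrightarrow> yb i \<in> slice (f i) (\<alpha> i) \<and> norm (ww i - tp x0 (yb i)) \<le> E" by metis
      define a' where "a' = (\<Sum>i<n. lam i *\<^sub>R ya i)"
      define b' where "b' = (\<Sum>i<n. lam i *\<^sub>R yb i)"
      have a'C: "a' \<in> C" unfolding a'_def C_def using ya by blast
      have b'C: "b' \<in> C" unfolding b'_def C_def using yb by blast
      have tpa: "tp x0 a' = (\<Sum>i<n. lam i *\<^sub>R tp x0 (ya i))" unfolding a'_def by (simp add: tpb.sum_right tpb.scaleR_right)
      have tpb': "tp x0 b' = (\<Sum>i<n. lam i *\<^sub>R tp x0 (yb i))" unfolding b'_def by (simp add: tpb.sum_right tpb.scaleR_right)
      have dec: "a - b = (\<Sum>i<n. lam i *\<^sub>R (zz i - tp x0 (ya i))) - (\<Sum>i<n. lam i *\<^sub>R (ww i - tp x0 (yb i))) + tp x0 (a' - b')"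
      proof -
        have s1: "(\<Sum>i<n. lam i *\<^sub>R (zz i - tp x0 (ya i))) = a - tp x0 a'"
          unfolding zz(1) tpa by (simp add: scaleR_diff_right sum_subtractf)
        have s2: "(\<Sum>i<n. lam i *\<^sub>R (ww i - tp x0 (yb i))) = b - tp x0 b'"
          unfolding ww(1) tpb' by (simp add: scaleR_diff_right sum_subtractf)
        show ?thesis by (simp only: s1 s2 tpb.diff_right) (simp add: algebra_simps)
      qed
      have n1: "norm (\<Sum>i<n. lam i *\<^sub>R (zz i - tp x0 (ya i))) \<le> E" using ya by (intro conv_norm_le[OF lam0 lam1]) auto
      have n2: "norm (\<Sum>i<n. lam i *\<^sub>R (ww i - tp x0 (yb i))) \<le> E" using yb by (intro conv_norm_le[OF lam0 lam1]) auto
      have n3: "norm (tp x0 (a' - b')) \<le> norm (a' - b')"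
      proof -
        have "norm x0 * norm (a' - b') \<le> 1 * norm (a' - b')" using x0 by (intro mult_right_mono) auto
        then show ?thesis using tpn[of x0 "a' - b'"] by simp
      qed
      have "norm (a - b) \<le> E + E + norm (a' - b')"
      proof -
        let ?X = "(\<Sum>i<n. lam i *\<^sub>R (zz i - tp x0 (ya i)))" and ?Y = "(\<Sum>i<n. lam i *\<^sub>R (ww i - tp x0 (yb i)))"
        have t1: "norm (?X - ?Y + tp x0 (a' - b')) \<le> norm (?X - ?Y) + norm (tp x0 (a' - b'))" by (rule norm_triangle_ineq)
        have t2: "norm (?X - ?Y) \<le> norm ?X + norm ?Y" by (rule norm_triangle_ineq4)
        show ?thesis unfolding dec using t1 t2 n1 n2 n3 by linarith
      qed
      then have "2 - \<gamma> - 2 * E < norm (a' - b')" using ab(3) by (simp add: dist_norm)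
      moreover have "2 - \<delta> \<le> 2 - \<gamma> - 2 * E" unfolding E_def frac \<epsilon>_def using g0 \<delta> by (simp add: field_simps)
      ultimately have "2 - \<delta> < dist a' b'" by (simp add: dist_norm)
      then show ?thesis using a'C b'C by blast
    qed
    have dge: "2 \<le> diameter C"
    proof (rule ccontr)
      assume "\<not> 2 \<le> diameter C"
      define \<delta> where "\<delta> = min 1 (2 - diameter C)"
      have "0 < \<delta>" "\<delta> \<le> 1" using \<open>\<not> 2 \<le> diameter C\<close> unfolding \<delta>_def by auto
      then obtain a b where "a \<in> C" "b \<in> C" "2 - \<delta> < dist a b" using far by blast
      then have "2 - \<delta> < diameter C" using diameter_bounded_bound[OF Cbdd] by fastforce
      then show False unfolding \<delta>_def by linarith
    qed
    show "diameter C = 2" using dle dge by simp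
  qed
qed

end
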